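(* Assume that $f$ satisfies the monotonicity condition $$(f(x,s_2,\xi_2)-f(x,s_1,\xi_1))(s_2-s_1)\le(\lambda_1-\varepsilon)(s_2-s_1)^2+L|\xi_2-\xi_1||s_2-s_1|$$ for all $x\in\Omega$, $s_1,s_2\in\mathbb R$ and $\xi_1,\xi_2\in\mathbb R^d$. Then the Dirichlet problem $-\Delta u=f(x,u,\nabla u)$ in $\Omega$, $u=0$ on $\partial\Omega$, has at most one weak solution.
   Context: Let $\Omega\subseteq\mathbb R^d$ be an arbitrary open set. $\lambda_1=\lambda_1(\Omega)\ge0$ denotes the largest real number such that $\lambda_1\|u\|^2_{L_2(\Omega)}\le\|\nabla u\|^2_{L_2(\Omega)}$ for all $u\in H^1_0(\Omega)$. $f:\Omega\times\mathbb R\times\mathbb R^d\to\mathbb R$ is a Carathéodory function: it is measurable in $x$ for fixed $(s,\xi)$, and continuous in $(s,\xi)$ for almost every $x$. Fix $\varepsilon>0$. Define $L_{\max}=\varepsilon/\sqrt{\lambda_1}$ if $\varepsilon\le2\lambda_1$ and $L_{\max}=2\sqrt{\varepsilon-\lambda_1}$ if $\varepsilon\ge2\lambda_1$. Let $0\le L<L_{\max}$. A weak solution of the Dirichlet problem is a function $u\in H^1_0(\Omega)$ with $f(\cdot,u,\nabla u)\in L_2(\Omega)$ and $\int_\Omega\nabla u\cdot\nabla\varphi\,dx=\int_\Omega f(x,u,\nabla u)\varphi\,dx$ for all $\varphi\in C_c^\infty(\Omega)$. *)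

theory Defs
  imports "HOL-Analysis.Analysis"
begin

text \<open>Functions on R^d are modelled as functions on an arbitrary euclidean space 'a
  (so d = DIM('a)); the Euclidean norm is the norm of 'a.\<close>

definition grad :: "('a::euclidean_space \<Rightarrow> real) \<Rightarrow> 'a \<Rightarrow> 'a" where
  "grad \<phi> x = (\<Sum>i\<in>Basis. frechet_derivative \<phi> (at x) i *\<^sub>R i)"

fun Ck :: "nat \<Rightarrow> ('a::euclidean_space \<Rightarrow> real) \<Rightarrow> bool" where
  "Ck 0 \<phi> = continuous_on UNIV \<phi>"
| "Ck (Suc k) \<phi> = (\<phi> differentiable_on UNIV \<and>
      (\<forall>v. Ck k (\<lambda>x. frechet_derivative \<phi> (at x) v)))"

definition smooth :: "('a::euclidean_space \<Rightarrow> real) \<Rightarrow> bool" where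
  "smooth \<phi> \<longleftrightarrow> (\<forall>k. Ck k \<phi>)"

text \<open>C_c^infinity(Omega), elements extended by zero outside Omega.\<close>
definition test_fun :: "'a::euclidean_space set \<Rightarrow> ('a \<Rightarrow> real) \<Rightarrow> bool" where
  "test_fun \<Omega> \<phi> \<longleftrightarrow> smooth \<phi> \<and> compact (closure {x. \<phi> x \<noteq> 0}) \<and>
      closure {x. \<phi> x \<noteq> 0} \<subseteq> \<Omega>"

definition L2 :: "'a::euclidean_space set \<Rightarrow> ('a \<Rightarrow> real) \<Rightarrow> bool" where
  "L2 \<Omega> u \<longleftrightarrow> u \<in> borel_measurable (lebesgue_on \<Omega>) \<and>
      integrable (lebesgue_on \<Omega>) (\<lambda>x. (u x)\<^sup>2)"

definition L2v :: "'a::euclidean_space set \<Rightarrow> ('a \<Rightarrow> 'a) \<Rightarrow> bool" where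
  "L2v \<Omega> g \<longleftrightarrow> g \<in> borel_measurable (lebesgue_on \<Omega>) \<and>
      integrable (lebesgue_on \<Omega>) (\<lambda>x. (norm (g x))\<^sup>2)"

definition weak_grad :: "'a::euclidean_space set \<Rightarrow> ('a \<Rightarrow> real) \<Rightarrow> ('a \<Rightarrow> 'a) \<Rightarrow> bool" where
  "weak_grad \<Omega> u g \<longleftrightarrow> (\<forall>\<phi>. test_fun \<Omega> \<phi> \<longrightarrow> (\<forall>i\<in>Basis.
      (\<integral>x. u x * (grad \<phi> x \<bullet> i) \<partial>lebesgue_on \<Omega>) =
      - (\<integral>x. (g x \<bullet> i) * \<phi> x \<partial>lebesgue_on \<Omega>)))"

definition H10 :: "'a::euclidean_space set \<Rightarrow> ('a \<Rightarrow> real) \<Rightarrow> ('a \<Rightarrow> 'a) \<Rightarrow> bool" where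
  "H10 \<Omega> u g \<longleftrightarrow> L2 \<Omega> u \<and> L2v \<Omega> g \<and> weak_grad \<Omega> u g \<and>
     (\<exists>\<phi>::nat \<Rightarrow> 'a \<Rightarrow> real. (\<forall>n. test_fun \<Omega> (\<phi> n)) \<and>
        (\<lambda>n. \<integral>x. (\<phi> n x - u x)\<^sup>2 \<partial>lebesgue_on \<Omega>) \<longlonglongrightarrow> 0 \<and>
        (\<lambda>n. \<integral>x. (norm (grad (\<phi> n) x - g x))\<^sup>2 \<partial>lebesgue_on \<Omega>) \<longlonglongrightarrow> 0)"

text \<open>lambda_1(Omega): the largest constant in the Poincare inequality on H^1_0(Omega).\<close>
definition lambda1 :: "'a::euclidean_space set \<Rightarrow> real" where
  "lambda1 \<Omega> = Sup {c. \<forall>u g. H10 \<Omega> u g \<longrightarrow>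
      c * (\<integral>x. (u x)\<^sup>2 \<partial>lebesgue_on \<Omega>) \<le> (\<integral>x. (norm (g x))\<^sup>2 \<partial>lebesgue_on \<Omega>)}"

definition caratheodory :: "'a::euclidean_space set \<Rightarrow> ('a \<Rightarrow> real \<Rightarrow> 'a \<Rightarrow> real) \<Rightarrow> bool" where
  "caratheodory \<Omega> f \<longleftrightarrow>
     (\<forall>s \<xi>. (\<lambda>x. f x s \<xi>) \<in> borel_measurable (lebesgue_on \<Omega>)) \<and>
     (AE x in lebesgue_on \<Omega>. continuous_on UNIV (\<lambda>(s, \<xi>). f x s \<xi>))"

definition weak_solution :: "'a::euclidean_space set \<Rightarrow> ('a \<Rightarrow> real \<Rightarrow> 'a \<Rightarrow> real) \<Rightarrow>
    ('a \<Rightarrow> real) \<Rightarrow> ('a \<Rightarrow> 'a) \<Rightarrow> bool" where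
  "weak_solution \<Omega> f u g \<longleftrightarrow> H10 \<Omega> u g \<and> L2 \<Omega> (\<lambda>x. f x (u x) (g x)) \<and>
     (\<forall>\<phi>. test_fun \<Omega> \<phi> \<longrightarrow>
        (\<integral>x. g x \<bullet> grad \<phi> x \<partial>lebesgue_on \<Omega>) = (\<integral>x. f x (u x) (g x) * \<phi> x \<partial>lebesgue_on \<Omega>))"

definition Lmax :: "real \<Rightarrow> real \<Rightarrow> real" where
  "Lmax l1 \<epsilon> = (if \<epsilon> \<le> 2 * l1 then \<epsilon> / sqrt l1 else 2 * sqrt (\<epsilon> - l1))"

end

theory Submission
  imports Defs
begin

lemma Ck_cont: "Ck k \<phi> \<Longrightarrow> continuous_on UNIV \<phi>"
  by (cases k) (auto intro: differentiable_imp_continuous_on)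

lemma fd_diff:
  assumes "\<phi> differentiable (at x)" "\<psi> differentiable (at x)"
  shows "frechet_derivative (\<lambda>x. \<phi> x - \<psi> x) (at x) =
         (\<lambda>v. frechet_derivative \<phi> (at x) v - frechet_derivative \<psi> (at x) v)"
proof -
  have "((\<lambda>x. \<phi> x - \<psi> x) has_derivative
         (\<lambda>v. frechet_derivative \<phi> (at x) v - frechet_derivative \<psi> (at x) v)) (at x)"
    using assms by (intro has_derivative_diff) (auto simp: frechet_derivative_works)
  then show ?thesis by (rule frechet_derivative_at[symmetric])
qed

lemma Ck_diff: "Ck k \<phi> \<Longrightarrow> Ck k \<psi> \<Longrightarrow> Ck k (\<lambda>x. \<phi> x - \<psi> x)"
proof (induction k arbitrary: \<phi> \<psi>)
  case 0
  then show ?case by (auto intro: continuous_intros)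
next
  case (Suc k)
  have d1: "\<And>x. \<phi> differentiable (at x)" and d2: "\<And>x. \<psi> differentiable (at x)"
    using Suc.prems by (auto simp: differentiable_on_def)
  have "(\<lambda>x. \<phi> x - \<psi> x) differentiable_on UNIV"
    using Suc.prems by (auto intro: differentiable_on_diff)
  moreover have "Ck k (\<lambda>x. frechet_derivative (\<lambda>x. \<phi> x - \<psi> x) (at x) v)" for v
    using Suc.IH[of "\<lambda>x. frechet_derivative \<phi> (at x) v" "\<lambda>x. frechet_derivative \<psi> (at x) v"]
      Suc.prems by (simp add: fd_diff[OF d1 d2])
  ultimately show ?case by simp
qed

lemma smooth_diff_at: "smooth \<phi> \<Longrightarrow> \<phi> differentiable (at x)"
proof -
  assume "smooth \<phi>"
  then have "Ck (Suc 0) \<phi>" unfolding smooth_def by blast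
  then show ?thesis by (simp add: differentiable_on_def)
qed

lemma grad_diff: "smooth \<phi> \<Longrightarrow> smooth \<psi> \<Longrightarrow> grad (\<lambda>x. \<phi> x - \<psi> x) x = grad \<phi> x - grad \<psi> x"
  unfolding grad_def
  by (simp add: fd_diff smooth_diff_at scaleR_diff_left sum_subtractf)

lemma grad_cont: "smooth \<phi> \<Longrightarrow> continuous_on UNIV (grad \<phi>)"
proof -
  assume s: "smooth \<phi>"
  have "Ck 2 \<phi>" using s smooth_def by blast
  then have "Ck 1 (\<lambda>x. frechet_derivative \<phi> (at x) v)" for v
    by (simp add: numeral_2_eq_2)
  then have "continuous_on UNIV (\<lambda>x. frechet_derivative \<phi> (at x) v)" for v
    using Ck_cont by blast
  then show ?thesis unfolding grad_def
    by (intro continuous_on_sum continuous_on_scaleR) auto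
qed

lemma grad_zero:
  assumes s: "smooth \<phi>" and x: "x \<notin> closure {x. \<phi> x \<noteq> 0}"
  shows "grad \<phi> x = 0"
proof -
  let ?U = "- closure {x. \<phi> x \<noteq> 0}"
  have "open ?U" by (rule open_Compl) (rule closed_closure)
  have d0: "((\<lambda>_. 0) has_derivative (\<lambda>_. 0)) (at x)" by (rule has_derivative_const)
  have "(\<phi> has_derivative (\<lambda>_. 0)) (at x)"
  proof (rule has_derivative_transform_within_open[OF d0 \<open>open ?U\<close>])
    show "x \<in> ?U" using x by (simp only: Compl_iff not_False_eq_True)
    fix y assume "y \<in> ?U"
    then have "y \<notin> closure {x. \<phi> x \<noteq> 0}" by (rule ComplD)
    then have "y \<notin> {x. \<phi> x \<noteq> 0}" by (rule contra_subsetD[OF closure_subset])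
    then show "0 = \<phi> y" by simp
  qed
  then have "frechet_derivative \<phi> (at x) = (\<lambda>_. 0)"
    by (rule frechet_derivative_at[symmetric])
  then show ?thesis by (simp add: grad_def)
qed


lemma open_sets_lebesgue: "open S \<Longrightarrow> S \<in> sets lebesgue"
  using borel_open sets_completionI_sets sets_lborel by blast

lemma cont_compact_integrable:
  fixes \<psi> :: "'a::euclidean_space \<Rightarrow> real"
  assumes c: "continuous_on UNIV \<psi>" and K: "compact K" and z: "\<And>x. x \<notin> K \<Longrightarrow> \<psi> x = 0"
    and S: "S \<in> sets lebesgue"
  shows "integrable (lebesgue_on S) \<psi>"
proof -
  obtain a where Ka: "K \<subseteq> cbox (-a) a"
    using K compact_imp_bounded bounded_subset_cbox_symmetric by metis
  have "integrable (lebesgue_on (cbox (-a) a)) \<psi>"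
    by (rule continuous_imp_integrable) (rule continuous_on_subset[OF c], simp)
  then have "integrable lebesgue (\<lambda>x. indicator (cbox (-a) a) x *\<^sub>R \<psi> x)"
    by (simp add: integrable_restrict_space)
  moreover have "(\<lambda>x. indicator (cbox (-a) a) x *\<^sub>R \<psi> x) = \<psi>"
    using Ka z by (auto simp: indicator_def fun_eq_iff)
  ultimately have "integrable lebesgue \<psi>" by simp
  then have "integrable lebesgue (\<lambda>x. indicator S x *\<^sub>R \<psi> x)"
    using S by (rule integrable_mult_indicator[rotated])
  then show ?thesis using S by (simp add: integrable_restrict_space)
qed

lemma test_L2:
  assumes t: "test_fun \<Omega> \<phi>" and o: "open \<Omega>"
  shows "L2 \<Omega> \<phi>"
proof -
  have s: "smooth \<phi>" using t test_fun_def by blast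
  have c: "continuous_on UNIV \<phi>" using s Ck_cont smooth_def by blast
  have "\<phi> \<in> borel_measurable (lebesgue_on \<Omega>)"
    by (rule continuous_imp_measurable_on_sets_lebesgue[OF continuous_on_subset[OF c] open_sets_lebesgue[OF o]]) simp
  moreover have "integrable (lebesgue_on \<Omega>) (\<lambda>x. (\<phi> x)\<^sup>2)"
  proof (rule cont_compact_integrable[where K="closure {x. \<phi> x \<noteq> 0}"])
    show "continuous_on UNIV (\<lambda>x. (\<phi> x)\<^sup>2)" using c by (intro continuous_intros)
    show "compact (closure {x. \<phi> x \<noteq> 0})" using t test_fun_def by blast
    show "(\<phi> x)\<^sup>2 = 0" if "x \<notin> closure {x. \<phi> x \<noteq> 0}" for x
    proof -
      have "x \<notin> {x. \<phi> x \<noteq> 0}" by (rule contra_subsetD[OF closure_subset that])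
      then show ?thesis by simp
    qed
    show "\<Omega> \<in> sets lebesgue" using o open_sets_lebesgue by blast
  qed
  ultimately show ?thesis by (simp add: L2_def)
qed

lemma test_L2v:
  assumes t: "test_fun \<Omega> \<phi>" and o: "open \<Omega>"
  shows "L2v \<Omega> (grad \<phi>)"
proof -
  have s: "smooth \<phi>" using t test_fun_def by blast
  have c: "continuous_on UNIV (grad \<phi>)" using s grad_cont by blast
  have "grad \<phi> \<in> borel_measurable (lebesgue_on \<Omega>)"
    by (rule continuous_imp_measurable_on_sets_lebesgue[OF continuous_on_subset[OF c] open_sets_lebesgue[OF o]]) simp
  moreover have "integrable (lebesgue_on \<Omega>) (\<lambda>x. (norm (grad \<phi> x))\<^sup>2)"
  proof (rule cont_compact_integrable[where K="closure {x. \<phi> x \<noteq> 0}"])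
    show "continuous_on UNIV (\<lambda>x. (norm (grad \<phi> x))\<^sup>2)" using c by (intro continuous_intros)
    show "compact (closure {x. \<phi> x \<noteq> 0})" using t test_fun_def by blast
    show "(norm (grad \<phi> x))\<^sup>2 = 0" if "x \<notin> closure {x. \<phi> x \<noteq> 0}" for x
      using grad_zero[OF s that] by simp
    show "\<Omega> \<in> sets lebesgue" using o open_sets_lebesgue by blast
  qed
  ultimately show ?thesis by (simp add: L2v_def)
qed

lemma test_diff:
  assumes t1: "test_fun \<Omega> \<phi>" and t2: "test_fun \<Omega> \<psi>"
  shows "test_fun \<Omega> (\<lambda>x. \<phi> x - \<psi> x)"
proof -
  have s1: "smooth \<phi>" and s2: "smooth \<psi>" using t1 t2 test_fun_def by auto
  have "smooth (\<lambda>x. \<phi> x - \<psi> x)"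
    unfolding smooth_def
  proof
    fix k show "Ck k (\<lambda>x. \<phi> x - \<psi> x)"
      using s1 s2 unfolding smooth_def by (intro Ck_diff) auto
  qed
  moreover
  have sub: "{x. \<phi> x - \<psi> x \<noteq> 0} \<subseteq> closure {x. \<phi> x \<noteq> 0} \<union> closure {x. \<psi> x \<noteq> 0}"
  proof
    fix x assume "x \<in> {x. \<phi> x - \<psi> x \<noteq> 0}"
    then have "\<phi> x \<noteq> 0 \<or> \<psi> x \<noteq> 0" by auto
    then show "x \<in> closure {x. \<phi> x \<noteq> 0} \<union> closure {x. \<psi> x \<noteq> 0}"
      by (metis (mono_tags, lifting) UnI1 UnI2 closure_subset mem_Collect_eq subsetD)
  qed
  have cl: "closed (closure {x. \<phi> x \<noteq> 0} \<union> closure {x. \<psi> x \<noteq> 0})" by auto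
  have sub2: "closure {x. \<phi> x - \<psi> x \<noteq> 0} \<subseteq> closure {x. \<phi> x \<noteq> 0} \<union> closure {x. \<psi> x \<noteq> 0}"
    using closure_minimal[OF sub cl] .
  have "compact (closure {x. \<phi> x \<noteq> 0} \<union> closure {x. \<psi> x \<noteq> 0})"
    using t1 t2 unfolding test_fun_def by (intro compact_Un) auto
  then have "compact (closure {x. \<phi> x - \<psi> x \<noteq> 0})"
  proof -
    assume cU: "compact (closure {x. \<phi> x \<noteq> 0} \<union> closure {x. \<psi> x \<noteq> 0})"
    have "compact ((closure {x. \<phi> x \<noteq> 0} \<union> closure {x. \<psi> x \<noteq> 0}) \<inter> closure {x. \<phi> x - \<psi> x \<noteq> 0})"
      using cU by (rule compact_Int_closed) simp
    moreover have "(closure {x. \<phi> x \<noteq> 0} \<union> closure {x. \<psi> x \<noteq> 0}) \<inter> closure {x. \<phi> x - \<psi> x \<noteq> 0} = closure {x. \<phi> x - \<psi> x \<noteq> 0}"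
      using sub2 by (rule Int_absorb1)
    ultimately show ?thesis by simp
  qed
  moreover have "closure {x. \<phi> x - \<psi> x \<noteq> 0} \<subseteq> \<Omega>"
    using sub2 t1 t2 unfolding test_fun_def by blast
  ultimately show ?thesis by (simp add: test_fun_def)
qed




lemma amgm_aux:
  fixes A B C :: real
  assumes A: "A \<ge> 0" and B: "B \<ge> 0" and h: "\<And>t. t > 0 \<Longrightarrow> 2 * C \<le> t * A + B / t"
  shows "C \<le> sqrt A * sqrt B"
proof (rule ccontr)
  assume "\<not> C \<le> sqrt A * sqrt B"
  then have Cg: "C > sqrt A * sqrt B" by simp
  have sA: "sqrt A \<ge> 0" and sB: "sqrt B \<ge> 0" using A B by auto
  then have C0: "C > 0" using Cg sA sB
    by (metis mult_nonneg_nonneg not_le order.trans)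
  show False
  proof (cases "A = 0")
    case True
    have "2 * C \<le> (B + 1) / C * A + B / ((B + 1) / C)"
      using h[of "(B+1)/C"] C0 B by simp
    also have "\<dots> = B * C / (B + 1)" using True by simp
    also have "\<dots> < C" using C0 B by (simp add: field_simps)
    finally show False using C0 by simp
  next
    case A0: False
    show False
    proof (cases "B = 0")
      case True
      have "2 * C \<le> C / (A + 1) * A + B / (C / (A + 1))"
        using h[of "C/(A+1)"] C0 A by simp
      also have "\<dots> = C * A / (A + 1)" using True by simp
      also have "\<dots> < C" using C0 A by (simp add: field_simps)
      finally show False using C0 by simp
    next
      case False
      have Ap: "A > 0" "B > 0" using A B A0 False by auto
      then have pa: "sqrt A > 0" and pb: "sqrt B > 0" by auto
      have "2 * C \<le> (sqrt B / sqrt A) * A + B / (sqrt B / sqrt A)"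
        using h[of "sqrt B / sqrt A"] pa pb by simp
      also have "(sqrt B / sqrt A) * A = sqrt A * sqrt B"
      proof -
        have e: "A = sqrt A * sqrt A" using A by simp
        have g: "\<And>s c::real. s > 0 \<Longrightarrow> (c / s) * (s * s) = s * c" by (simp add: field_simps)
        have "(sqrt B / sqrt A) * (sqrt A * sqrt A) = sqrt A * sqrt B" using g[OF pa] .
        then show ?thesis using e by metis
      qed
      also have "B / (sqrt B / sqrt A) = sqrt A * sqrt B"
      proof -
        have e: "B = sqrt B * sqrt B" using B by simp
        have g: "\<And>s c::real. s > 0 \<Longrightarrow> c > 0 \<Longrightarrow> (s * s) / (s / c) = c * s" by (simp add: field_simps)
        have "(sqrt B * sqrt B) / (sqrt B / sqrt A) = sqrt A * sqrt B" using g[OF pb pa] .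
        then show ?thesis using e by metis
      qed
      finally show False using Cg by simp
    qed
  qed
qed

lemma young_pt:
  fixes a b t :: real
  assumes "t > 0"
  shows "\<bar>a * b\<bar> \<le> (t / 2) * a\<^sup>2 + (1 / (2 * t)) * b\<^sup>2"
proof -
  have "0 \<le> (t * \<bar>a\<bar> - \<bar>b\<bar>)\<^sup>2" by simp
  then have "2 * t * \<bar>a * b\<bar> \<le> t\<^sup>2 * a\<^sup>2 + b\<^sup>2"
    by (simp add: power2_eq_square algebra_simps abs_mult)
  then have "2 * t * \<bar>a * b\<bar> / (2 * t) \<le> (t\<^sup>2 * a\<^sup>2 + b\<^sup>2) / (2 * t)"
    using assms by (intro divide_right_mono) auto
  then show ?thesis using assms by (simp add: field_simps power2_eq_square)
qed

lemma cs_real: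
  fixes a b :: "'x \<Rightarrow> real"
  assumes am: "a \<in> borel_measurable M" and bm: "b \<in> borel_measurable M"
    and ai: "integrable M (\<lambda>x. (a x)\<^sup>2)" and bi: "integrable M (\<lambda>x. (b x)\<^sup>2)"
  shows "integrable M (\<lambda>x. a x * b x)"
    and "(\<integral>x. \<bar>a x * b x\<bar> \<partial>M) \<le> sqrt (\<integral>x. (a x)\<^sup>2 \<partial>M) * sqrt (\<integral>x. (b x)\<^sup>2 \<partial>M)"
proof -
  have y1: "\<bar>a x * b x\<bar> \<le> (1 / 2) * (a x)\<^sup>2 + (1 / (2 * 1)) * (b x)\<^sup>2" for x
    by (rule young_pt) simp
  show int: "integrable M (\<lambda>x. a x * b x)"
  proof (rule Bochner_Integration.integrable_bound[where f="\<lambda>x. (1 / 2) * (a x)\<^sup>2 + (1 / (2 * 1)) * (b x)\<^sup>2"])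
    show "integrable M (\<lambda>x. (1 / 2) * (a x)\<^sup>2 + (1 / (2 * 1)) * (b x)\<^sup>2)"
      using ai bi by simp
    show "(\<lambda>x. a x * b x) \<in> borel_measurable M" using am bm by simp
    show "AE x in M. norm (a x * b x) \<le> norm ((1 / 2) * (a x)\<^sup>2 + (1 / (2 * 1)) * (b x)\<^sup>2)"
      using y1 by (intro AE_I2) (smt (verit) real_norm_def zero_le_power2)
  qed
  show "(\<integral>x. \<bar>a x * b x\<bar> \<partial>M) \<le> sqrt (\<integral>x. (a x)\<^sup>2 \<partial>M) * sqrt (\<integral>x. (b x)\<^sup>2 \<partial>M)"
  proof (rule amgm_aux)
    show "0 \<le> (\<integral>x. (a x)\<^sup>2 \<partial>M)" by simp
    show "0 \<le> (\<integral>x. (b x)\<^sup>2 \<partial>M)" by simp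
    fix t :: real assume t: "t > 0"
    have "(\<integral>x. \<bar>a x * b x\<bar> \<partial>M) \<le> (\<integral>x. (t / 2) * (a x)\<^sup>2 + (1 / (2 * t)) * (b x)\<^sup>2 \<partial>M)"
      using int ai bi young_pt[OF t] by (intro integral_mono) auto
    also have "\<dots> = (t / 2) * (\<integral>x. (a x)\<^sup>2 \<partial>M) + (1 / (2 * t)) * (\<integral>x. (b x)\<^sup>2 \<partial>M)"
      using ai bi by simp
    finally show "2 * (\<integral>x. \<bar>a x * b x\<bar> \<partial>M) \<le> t * (\<integral>x. (a x)\<^sup>2 \<partial>M) + (\<integral>x. (b x)\<^sup>2 \<partial>M) / t"
      using t by (simp add: field_simps)
  qed
qed




lemma cs_vec:
  fixes a b :: "'x \<Rightarrow> 'a::euclidean_space"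
  assumes am: "a \<in> borel_measurable M" and bm: "b \<in> borel_measurable M"
    and ai: "integrable M (\<lambda>x. (norm (a x))\<^sup>2)" and bi: "integrable M (\<lambda>x. (norm (b x))\<^sup>2)"
  shows "integrable M (\<lambda>x. a x \<bullet> b x)"
    and "\<bar>\<integral>x. a x \<bullet> b x \<partial>M\<bar> \<le> sqrt (\<integral>x. (norm (a x))\<^sup>2 \<partial>M) * sqrt (\<integral>x. (norm (b x))\<^sup>2 \<partial>M)"
proof -
  have nm: "(\<lambda>x. norm (a x)) \<in> borel_measurable M" "(\<lambda>x. norm (b x)) \<in> borel_measurable M"
    using am bm by auto
  note c = cs_real[OF nm ai bi]
  show int: "integrable M (\<lambda>x. a x \<bullet> b x)"
  proof (rule Bochner_Integration.integrable_bound[where f="\<lambda>x. norm (a x) * norm (b x)"])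
    show "integrable M (\<lambda>x. norm (a x) * norm (b x))" by (rule c(1))
    show "(\<lambda>x. a x \<bullet> b x) \<in> borel_measurable M" using am bm by (rule borel_measurable_inner)
    show "AE x in M. norm (a x \<bullet> b x) \<le> norm (norm (a x) * norm (b x))"
      by (intro AE_I2) (simp add: Cauchy_Schwarz_ineq2)
  qed
  have "\<bar>\<integral>x. a x \<bullet> b x \<partial>M\<bar> \<le> (\<integral>x. \<bar>a x \<bullet> b x\<bar> \<partial>M)"
    using integral_norm_bound[of M "\<lambda>x. a x \<bullet> b x"] by simp
  also have "\<dots> \<le> (\<integral>x. \<bar>norm (a x) * norm (b x)\<bar> \<partial>M)"
    using int c(1) by (intro integral_mono) (auto simp: Cauchy_Schwarz_ineq2)
  also have "\<dots> \<le> sqrt (\<integral>x. (norm (a x))\<^sup>2 \<partial>M) * sqrt (\<integral>x. (norm (b x))\<^sup>2 \<partial>M)"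
    by (rule c(2))
  finally show "\<bar>\<integral>x. a x \<bullet> b x \<partial>M\<bar> \<le> sqrt (\<integral>x. (norm (a x))\<^sup>2 \<partial>M) * sqrt (\<integral>x. (norm (b x))\<^sup>2 \<partial>M)" .
qed

lemma cs_real_abs:
  fixes a b :: "'x \<Rightarrow> real"
  assumes am: "a \<in> borel_measurable M" and bm: "b \<in> borel_measurable M"
    and ai: "integrable M (\<lambda>x. (a x)\<^sup>2)" and bi: "integrable M (\<lambda>x. (b x)\<^sup>2)"
  shows "\<bar>\<integral>x. a x * b x \<partial>M\<bar> \<le> sqrt (\<integral>x. (a x)\<^sup>2 \<partial>M) * sqrt (\<integral>x. (b x)\<^sup>2 \<partial>M)"
proof -
  have "\<bar>\<integral>x. a x * b x \<partial>M\<bar> \<le> (\<integral>x. \<bar>a x * b x\<bar> \<partial>M)"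
    using integral_norm_bound[of M "\<lambda>x. a x * b x"] by simp
  also have "\<dots> \<le> sqrt (\<integral>x. (a x)\<^sup>2 \<partial>M) * sqrt (\<integral>x. (b x)\<^sup>2 \<partial>M)"
    by (rule cs_real(2)[OF assms])
  finally show ?thesis .
qed

lemma L2_diff:
  assumes "L2 \<Omega> a" "L2 \<Omega> b"
  shows "L2 \<Omega> (\<lambda>x. a x - b x)"
    and "(\<integral>x. (a x - b x)\<^sup>2 \<partial>lebesgue_on \<Omega>) \<le> 2 * (\<integral>x. (a x)\<^sup>2 \<partial>lebesgue_on \<Omega>) + 2 * (\<integral>x. (b x)\<^sup>2 \<partial>lebesgue_on \<Omega>)"
proof -
  have am: "a \<in> borel_measurable (lebesgue_on \<Omega>)" and bm: "b \<in> borel_measurable (lebesgue_on \<Omega>)"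
    and ai: "integrable (lebesgue_on \<Omega>) (\<lambda>x. (a x)\<^sup>2)" and bi: "integrable (lebesgue_on \<Omega>) (\<lambda>x. (b x)\<^sup>2)"
    using assms by (auto simp: L2_def)
  have pt: "(a x - b x)\<^sup>2 \<le> 2 * (a x)\<^sup>2 + 2 * (b x)\<^sup>2" for x
  proof -
    have "0 \<le> (a x + b x)\<^sup>2" by simp
    then show ?thesis by (simp add: power2_eq_square algebra_simps)
  qed
  have int: "integrable (lebesgue_on \<Omega>) (\<lambda>x. (a x - b x)\<^sup>2)"
  proof (rule Bochner_Integration.integrable_bound[where f="\<lambda>x. 2 * (a x)\<^sup>2 + 2 * (b x)\<^sup>2"])
    show "integrable (lebesgue_on \<Omega>) (\<lambda>x. 2 * (a x)\<^sup>2 + 2 * (b x)\<^sup>2)" using ai bi by simp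
    show "(\<lambda>x. (a x - b x)\<^sup>2) \<in> borel_measurable (lebesgue_on \<Omega>)" using am bm by simp
    show "AE x in lebesgue_on \<Omega>. norm ((a x - b x)\<^sup>2) \<le> norm (2 * (a x)\<^sup>2 + 2 * (b x)\<^sup>2)"
      using pt by (intro AE_I2) simp
  qed
  then show "L2 \<Omega> (\<lambda>x. a x - b x)" using am bm by (simp add: L2_def)
  have "(\<integral>x. (a x - b x)\<^sup>2 \<partial>lebesgue_on \<Omega>) \<le> (\<integral>x. 2 * (a x)\<^sup>2 + 2 * (b x)\<^sup>2 \<partial>lebesgue_on \<Omega>)"
    using int ai bi pt by (intro integral_mono) auto
  then show "(\<integral>x. (a x - b x)\<^sup>2 \<partial>lebesgue_on \<Omega>) \<le> 2 * (\<integral>x. (a x)\<^sup>2 \<partial>lebesgue_on \<Omega>) + 2 * (\<integral>x. (b x)\<^sup>2 \<partial>lebesgue_on \<Omega>)"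
    using ai bi by simp
qed

lemma L2v_diff:
  assumes "L2v \<Omega> a" "L2v \<Omega> b"
  shows "L2v \<Omega> (\<lambda>x. a x - b x)"
    and "(\<integral>x. (norm (a x - b x))\<^sup>2 \<partial>lebesgue_on \<Omega>) \<le> 2 * (\<integral>x. (norm (a x))\<^sup>2 \<partial>lebesgue_on \<Omega>) + 2 * (\<integral>x. (norm (b x))\<^sup>2 \<partial>lebesgue_on \<Omega>)"
proof -
  have am: "a \<in> borel_measurable (lebesgue_on \<Omega>)" and bm: "b \<in> borel_measurable (lebesgue_on \<Omega>)"
    and ai: "integrable (lebesgue_on \<Omega>) (\<lambda>x. (norm (a x))\<^sup>2)" and bi: "integrable (lebesgue_on \<Omega>) (\<lambda>x. (norm (b x))\<^sup>2)"
    using assms by (auto simp: L2v_def)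
  have pt: "(norm (a x - b x))\<^sup>2 \<le> 2 * (norm (a x))\<^sup>2 + 2 * (norm (b x))\<^sup>2" for x
  proof -
    have t: "norm (a x - b x) \<le> norm (a x) + norm (b x)" by (rule norm_triangle_ineq4)
    have "(norm (a x - b x))\<^sup>2 \<le> (norm (a x) + norm (b x))\<^sup>2"
      using t by (intro power_mono) auto
    moreover have "0 \<le> (norm (a x) - norm (b x))\<^sup>2" by simp
    ultimately show ?thesis by (simp add: power2_eq_square algebra_simps)
  qed
  have int: "integrable (lebesgue_on \<Omega>) (\<lambda>x. (norm (a x - b x))\<^sup>2)"
  proof (rule Bochner_Integration.integrable_bound[where f="\<lambda>x. 2 * (norm (a x))\<^sup>2 + 2 * (norm (b x))\<^sup>2"])
    show "integrable (lebesgue_on \<Omega>) (\<lambda>x. 2 * (norm (a x))\<^sup>2 + 2 * (norm (b x))\<^sup>2)" using ai bi by simp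
    show "(\<lambda>x. (norm (a x - b x))\<^sup>2) \<in> borel_measurable (lebesgue_on \<Omega>)" using am bm by simp
    show "AE x in lebesgue_on \<Omega>. norm ((norm (a x - b x))\<^sup>2) \<le> norm (2 * (norm (a x))\<^sup>2 + 2 * (norm (b x))\<^sup>2)"
      using pt by (intro AE_I2) simp
  qed
  then show "L2v \<Omega> (\<lambda>x. a x - b x)" using am bm by (simp add: L2v_def)
  have "(\<integral>x. (norm (a x - b x))\<^sup>2 \<partial>lebesgue_on \<Omega>) \<le> (\<integral>x. 2 * (norm (a x))\<^sup>2 + 2 * (norm (b x))\<^sup>2 \<partial>lebesgue_on \<Omega>)"
    using int ai bi pt by (intro integral_mono) auto
  then show "(\<integral>x. (norm (a x - b x))\<^sup>2 \<partial>lebesgue_on \<Omega>) \<le> 2 * (\<integral>x. (norm (a x))\<^sup>2 \<partial>lebesgue_on \<Omega>) + 2 * (\<integral>x. (norm (b x))\<^sup>2 \<partial>lebesgue_on \<Omega>)"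
    using ai bi by simp
qed

lemma L2v_comp:
  assumes "L2v \<Omega> g" "i \<in> Basis"
  shows "L2 \<Omega> (\<lambda>x. g x \<bullet> i)"
proof -
  have gm: "g \<in> borel_measurable (lebesgue_on \<Omega>)" and gi: "integrable (lebesgue_on \<Omega>) (\<lambda>x. (norm (g x))\<^sup>2)"
    using assms by (auto simp: L2v_def)
  have "integrable (lebesgue_on \<Omega>) (\<lambda>x. (g x \<bullet> i)\<^sup>2)"
  proof (rule Bochner_Integration.integrable_bound[OF gi])
    show "(\<lambda>x. (g x \<bullet> i)\<^sup>2) \<in> borel_measurable (lebesgue_on \<Omega>)" using gm by simp
    show "AE x in lebesgue_on \<Omega>. norm ((g x \<bullet> i)\<^sup>2) \<le> norm ((norm (g x))\<^sup>2)"
    proof (intro AE_I2)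
      fix x
      have "\<bar>g x \<bullet> i\<bar> \<le> norm (g x)" using assms(2) by (rule Basis_le_norm)
      then have "\<bar>g x \<bullet> i\<bar>\<^sup>2 \<le> (norm (g x))\<^sup>2" by (intro power_mono) auto
      then show "norm ((g x \<bullet> i)\<^sup>2) \<le> norm ((norm (g x))\<^sup>2)" by simp
    qed
  qed
  then show ?thesis using gm by (simp add: L2_def)
qed

lemma L2_conv:
  assumes c: "L2 \<Omega> c" and d: "\<And>n. L2 \<Omega> (d n)" and e: "L2 \<Omega> e"
    and lim: "(\<lambda>n. \<integral>x. (d n x - e x)\<^sup>2 \<partial>lebesgue_on \<Omega>) \<longlonglongrightarrow> 0"
  shows "(\<lambda>n. \<integral>x. c x * d n x \<partial>lebesgue_on \<Omega>) \<longlonglongrightarrow> (\<integral>x. c x * e x \<partial>lebesgue_on \<Omega>)"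
proof (rule LIM_zero_cancel)
  let ?M = "lebesgue_on \<Omega>"
  have cm: "c \<in> borel_measurable ?M" "integrable ?M (\<lambda>x. (c x)\<^sup>2)" using c by (auto simp: L2_def)
  have em: "e \<in> borel_measurable ?M" "integrable ?M (\<lambda>x. (e x)\<^sup>2)" using e by (auto simp: L2_def)
  have bnd: "norm ((\<integral>x. c x * d n x \<partial>?M) - (\<integral>x. c x * e x \<partial>?M))
      \<le> sqrt (\<integral>x. (c x)\<^sup>2 \<partial>?M) * sqrt (\<integral>x. (d n x - e x)\<^sup>2 \<partial>?M)" for n
  proof -
    have dm: "d n \<in> borel_measurable ?M" "integrable ?M (\<lambda>x. (d n x)\<^sup>2)" using d[of n] by (auto simp: L2_def)
    have de: "L2 \<Omega> (\<lambda>x. d n x - e x)" using L2_diff(1)[OF d e] .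
    then have dem: "(\<lambda>x. d n x - e x) \<in> borel_measurable ?M" "integrable ?M (\<lambda>x. (d n x - e x)\<^sup>2)"
      by (auto simp: L2_def)
    have i1: "integrable ?M (\<lambda>x. c x * d n x)" using cs_real(1)[OF cm(1) dm(1) cm(2) dm(2)] .
    have i2: "integrable ?M (\<lambda>x. c x * e x)" using cs_real(1)[OF cm(1) em(1) cm(2) em(2)] .
    have "(\<integral>x. c x * d n x \<partial>?M) - (\<integral>x. c x * e x \<partial>?M) = (\<integral>x. c x * d n x - c x * e x \<partial>?M)"
      using i1 i2 by simp
    also have "\<dots> = (\<integral>x. c x * (d n x - e x) \<partial>?M)" by (simp add: algebra_simps)
    finally show ?thesis using cs_real_abs[OF cm(1) dem(1) cm(2) dem(2)] by simp
  qed
  have "(\<lambda>n. sqrt (\<integral>x. (c x)\<^sup>2 \<partial>?M) * sqrt (\<integral>x. (d n x - e x)\<^sup>2 \<partial>?M)) \<longlonglongrightarrow> sqrt (\<integral>x. (c x)\<^sup>2 \<partial>?M) * sqrt 0"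
    by (rule tendsto_mult_left[OF tendsto_real_sqrt[OF lim]])
  then have "(\<lambda>n. sqrt (\<integral>x. (c x)\<^sup>2 \<partial>?M) * sqrt (\<integral>x. (d n x - e x)\<^sup>2 \<partial>?M)) \<longlonglongrightarrow> 0" by simp
  then show "(\<lambda>n. (\<integral>x. c x * d n x \<partial>?M) - (\<integral>x. c x * e x \<partial>?M)) \<longlonglongrightarrow> 0"
    by (rule Lim_null_comparison[OF always_eventually[OF allI[OF bnd]]])
qed

lemma L2v_conv:
  assumes c: "L2v \<Omega> c" and d: "\<And>n. L2v \<Omega> (d n)" and e: "L2v \<Omega> e"
    and lim: "(\<lambda>n. \<integral>x. (norm (d n x - e x))\<^sup>2 \<partial>lebesgue_on \<Omega>) \<longlonglongrightarrow> 0"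
  shows "(\<lambda>n. \<integral>x. c x \<bullet> d n x \<partial>lebesgue_on \<Omega>) \<longlonglongrightarrow> (\<integral>x. c x \<bullet> e x \<partial>lebesgue_on \<Omega>)"
proof (rule LIM_zero_cancel)
  let ?M = "lebesgue_on \<Omega>"
  have cm: "c \<in> borel_measurable ?M" "integrable ?M (\<lambda>x. (norm (c x))\<^sup>2)" using c by (auto simp: L2v_def)
  have em: "e \<in> borel_measurable ?M" "integrable ?M (\<lambda>x. (norm (e x))\<^sup>2)" using e by (auto simp: L2v_def)
  have bnd: "norm ((\<integral>x. c x \<bullet> d n x \<partial>?M) - (\<integral>x. c x \<bullet> e x \<partial>?M))
      \<le> sqrt (\<integral>x. (norm (c x))\<^sup>2 \<partial>?M) * sqrt (\<integral>x. (norm (d n x - e x))\<^sup>2 \<partial>?M)" for n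
  proof -
    have dm: "d n \<in> borel_measurable ?M" "integrable ?M (\<lambda>x. (norm (d n x))\<^sup>2)" using d[of n] by (auto simp: L2v_def)
    have de: "L2v \<Omega> (\<lambda>x. d n x - e x)" using L2v_diff(1)[OF d e] .
    then have dem: "(\<lambda>x. d n x - e x) \<in> borel_measurable ?M" "integrable ?M (\<lambda>x. (norm (d n x - e x))\<^sup>2)"
      by (auto simp: L2v_def)
    have i1: "integrable ?M (\<lambda>x. c x \<bullet> d n x)" using cs_vec(1)[OF cm(1) dm(1) cm(2) dm(2)] .
    have i2: "integrable ?M (\<lambda>x. c x \<bullet> e x)" using cs_vec(1)[OF cm(1) em(1) cm(2) em(2)] .
    have "(\<integral>x. c x \<bullet> d n x \<partial>?M) - (\<integral>x. c x \<bullet> e x \<partial>?M) = (\<integral>x. c x \<bullet> d n x - c x \<bullet> e x \<partial>?M)"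
      using i1 i2 by simp
    also have "\<dots> = (\<integral>x. c x \<bullet> (d n x - e x) \<partial>?M)" by (simp add: inner_diff_right)
    finally show ?thesis using cs_vec(2)[OF cm(1) dem(1) cm(2) dem(2)] by simp
  qed
  have "(\<lambda>n. sqrt (\<integral>x. (norm (c x))\<^sup>2 \<partial>?M) * sqrt (\<integral>x. (norm (d n x - e x))\<^sup>2 \<partial>?M)) \<longlonglongrightarrow> sqrt (\<integral>x. (norm (c x))\<^sup>2 \<partial>?M) * sqrt 0"
    by (rule tendsto_mult_left[OF tendsto_real_sqrt[OF lim]])
  then have "(\<lambda>n. sqrt (\<integral>x. (norm (c x))\<^sup>2 \<partial>?M) * sqrt (\<integral>x. (norm (d n x - e x))\<^sup>2 \<partial>?M)) \<longlonglongrightarrow> 0" by simp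
  then show "(\<lambda>n. (\<integral>x. c x \<bullet> d n x \<partial>?M) - (\<integral>x. c x \<bullet> e x \<partial>?M)) \<longlonglongrightarrow> 0"
    by (rule Lim_null_comparison[OF always_eventually[OF allI[OF bnd]]])
qed




lemma final_arith:
  fixes a s l e L :: real
  assumes a: "a > 0" and s: "s \<ge> 0" and l: "l \<ge> 0" and e: "e > 0" and L0: "L \<ge> 0"
    and LL: "L < Lmax l e" and sl: "sqrt l * a \<le> s"
    and q: "s\<^sup>2 \<le> (l - e) * a\<^sup>2 + L * s * a"
  shows False
proof (cases "e \<le> 2 * l")
  case True
  let ?r = "sqrt l"
  have lp: "l > 0" using True e by linarith
  then have r: "?r > 0" by simp
  have rr: "?r * ?r = l" using l by simp
  have "L < e / ?r" using LL True by (simp add: Lmax_def)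
  then have Lr: "L * ?r < e" using r by (simp add: field_simps)
  have "e / ?r \<le> 2 * l / ?r" using True r by (simp add: divide_right_mono)
  also have "2 * l / ?r = 2 * ?r" using r rr by (simp add: field_simps)
  finally have L2r: "L \<le> 2 * ?r" using \<open>L < e / ?r\<close> by simp
  have f1: "s - ?r * a \<ge> 0" using sl by simp
  have f2: "s + ?r * a - L * a \<ge> 0"
  proof -
    have "L * a \<le> 2 * ?r * a" using L2r a by simp
    moreover have "?r * a \<le> s" using sl by simp
    ultimately show ?thesis by simp
  qed
  have p: "(s - ?r * a) * (s + ?r * a - L * a) \<ge> 0" using f1 f2 by simp
  have id: "s\<^sup>2 - L * s * a - (l - e) * a\<^sup>2
      = (s - ?r * a) * (s + ?r * a - L * a) + a\<^sup>2 * (e - L * ?r)"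
  proof -
    have "(s - ?r * a) * (s + ?r * a - L * a) + a\<^sup>2 * (e - L * ?r)
        = s\<^sup>2 - (?r * ?r) * a\<^sup>2 - L * s * a + e * a\<^sup>2"
      by (simp add: power2_eq_square algebra_simps)
    then show ?thesis using rr by (simp add: algebra_simps)
  qed
  have "a\<^sup>2 * (e - L * ?r) > 0" using a Lr by simp
  then have "s\<^sup>2 - L * s * a - (l - e) * a\<^sup>2 > 0" using id p by linarith
  then show False using q by linarith
next
  case False
  have "L < 2 * sqrt (e - l)" using LL False by (simp add: Lmax_def)
  then have "L\<^sup>2 < (2 * sqrt (e - l))\<^sup>2" using L0 by (intro power_strict_mono) auto
  also have "\<dots> = 4 * (e - l)" using False l by (simp add: power_mult_distrib)
  finally have LL2: "L\<^sup>2 < 4 * (e - l)" .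
  have id: "s\<^sup>2 - L * s * a - (l - e) * a\<^sup>2 = (s - L * a / 2)\<^sup>2 + a\<^sup>2 * (e - l - L\<^sup>2 / 4)"
    by (simp add: power2_eq_square algebra_simps)
  have "a\<^sup>2 * (e - l - L\<^sup>2 / 4) > 0" using a LL2 by simp
  moreover have "(s - L * a / 2)\<^sup>2 \<ge> 0" by simp
  ultimately have "s\<^sup>2 - L * s * a - (l - e) * a\<^sup>2 > 0" using id by linarith
  then show False using q by linarith
qed




lemma L2_prod: "L2 \<Omega> a \<Longrightarrow> L2 \<Omega> b \<Longrightarrow> integrable (lebesgue_on \<Omega>) (\<lambda>x. a x * b x)"
  unfolding L2_def by (intro cs_real(1)) auto

lemma L2v_inner: "L2v \<Omega> a \<Longrightarrow> L2v \<Omega> b \<Longrightarrow> integrable (lebesgue_on \<Omega>) (\<lambda>x. a x \<bullet> b x)"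
  unfolding L2v_def by (intro cs_vec(1)) auto

lemma L2v_norm: "L2v \<Omega> a \<Longrightarrow> L2 \<Omega> (\<lambda>x. norm (a x))"
  unfolding L2v_def L2_def by auto

lemma sandwich0:
  fixes X Y Z :: "nat \<Rightarrow> real"
  assumes "\<And>n. 0 \<le> X n" "\<And>n. X n \<le> 2 * Y n + 2 * Z n" "Y \<longlonglongrightarrow> 0" "Z \<longlonglongrightarrow> 0"
  shows "X \<longlonglongrightarrow> 0"
proof (rule tendsto_sandwich[where f="\<lambda>_. 0" and h="\<lambda>n. 2 * Y n + 2 * Z n"])
  show "\<forall>\<^sub>F n in sequentially. 0 \<le> X n" using assms(1) by simp
  show "\<forall>\<^sub>F n in sequentially. X n \<le> 2 * Y n + 2 * Z n" using assms(2) by simp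
  show "(\<lambda>_. 0) \<longlonglongrightarrow> (0::real)" by simp
  have "(\<lambda>n. 2 * Y n + 2 * Z n) \<longlonglongrightarrow> 2 * 0 + 2 * 0"
    using assms(3,4) by (intro tendsto_intros)
  then show "(\<lambda>n. 2 * Y n + 2 * Z n) \<longlonglongrightarrow> 0" by simp
qed

theorem proposition4p1:
  fixes \<Omega> :: "'a::euclidean_space set"
    and f :: "'a \<Rightarrow> real \<Rightarrow> 'a \<Rightarrow> real"
    and \<epsilon> L :: real
    and u1 u2 :: "'a \<Rightarrow> real" and g1 g2 :: "'a \<Rightarrow> 'a"
  assumes "open \<Omega>"
    and "caratheodory \<Omega> f"
    and "\<epsilon> > 0"
    and "0 \<le> L" and "L < Lmax (lambda1 \<Omega>) \<epsilon>"
    and mono: "\<And>x s1 s2 \<xi>1 \<xi>2. x \<in> \<Omega> \<Longrightarrow>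
        (f x s2 \<xi>2 - f x s1 \<xi>1) * (s2 - s1)
          \<le> (lambda1 \<Omega> - \<epsilon>) * (s2 - s1)\<^sup>2 + L * norm (\<xi>2 - \<xi>1) * \<bar>s2 - s1\<bar>"
    and "weak_solution \<Omega> f u1 g1"
    and "weak_solution \<Omega> f u2 g2"
  shows "AE x in lebesgue_on \<Omega>. u1 x = u2 x"
proof -
  let ?M = "lebesgue_on \<Omega>"
  have o: "open \<Omega>" by fact
  have H1: "H10 \<Omega> u1 g1" and LF1: "L2 \<Omega> (\<lambda>x. f x (u1 x) (g1 x))"
    and E1: "\<And>\<phi>. test_fun \<Omega> \<phi> \<Longrightarrow> (\<integral>x. g1 x \<bullet> grad \<phi> x \<partial>?M) = (\<integral>x. f x (u1 x) (g1 x) * \<phi> x \<partial>?M)"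
    using assms(7) unfolding weak_solution_def by auto
  have H2: "H10 \<Omega> u2 g2" and LF2: "L2 \<Omega> (\<lambda>x. f x (u2 x) (g2 x))"
    and E2: "\<And>\<phi>. test_fun \<Omega> \<phi> \<Longrightarrow> (\<integral>x. g2 x \<bullet> grad \<phi> x \<partial>?M) = (\<integral>x. f x (u2 x) (g2 x) * \<phi> x \<partial>?M)"
    using assms(8) unfolding weak_solution_def by auto
  have Lu1: "L2 \<Omega> u1" and Lg1: "L2v \<Omega> g1" and W1: "weak_grad \<Omega> u1 g1"
    using H1 unfolding H10_def by auto
  obtain p1 where p1t: "\<And>n. test_fun \<Omega> (p1 n)"
    and p1a: "(\<lambda>n. \<integral>x. (p1 n x - u1 x)\<^sup>2 \<partial>?M) \<longlonglongrightarrow> 0"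
    and p1b: "(\<lambda>n. \<integral>x. (norm (grad (p1 n) x - g1 x))\<^sup>2 \<partial>?M) \<longlonglongrightarrow> 0"
    using H1 unfolding H10_def by auto
  have Lu2: "L2 \<Omega> u2" and Lg2: "L2v \<Omega> g2" and W2: "weak_grad \<Omega> u2 g2"
    using H2 unfolding H10_def by auto
  obtain p2 where p2t: "\<And>n. test_fun \<Omega> (p2 n)"
    and p2a: "(\<lambda>n. \<integral>x. (p2 n x - u2 x)\<^sup>2 \<partial>?M) \<longlonglongrightarrow> 0"
    and p2b: "(\<lambda>n. \<integral>x. (norm (grad (p2 n) x - g2 x))\<^sup>2 \<partial>?M) \<longlonglongrightarrow> 0"
    using H2 unfolding H10_def by auto
  define w where "w = (\<lambda>x. u2 x - u1 x)"
  define h where "h = (\<lambda>x. g2 x - g1 x)"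
  define F where "F = (\<lambda>x. f x (u2 x) (g2 x) - f x (u1 x) (g1 x))"
  have Lw: "L2 \<Omega> w" unfolding w_def by (rule L2_diff(1)[OF Lu2 Lu1])
  have Lh: "L2v \<Omega> h" unfolding h_def by (rule L2v_diff(1)[OF Lg2 Lg1])
  have LF: "L2 \<Omega> F" unfolding F_def by (rule L2_diff(1)[OF LF2 LF1])

  have Hw: "H10 \<Omega> w h"
  proof -
    have wg: "weak_grad \<Omega> w h"
      unfolding weak_grad_def
    proof (intro allI impI ballI)
      fix \<phi> and i :: 'a assume t: "test_fun \<Omega> \<phi>" and i: "i \<in> Basis"
      have L\<phi>: "L2 \<Omega> \<phi>" by (rule test_L2[OF t o])
      have Lgi: "L2 \<Omega> (\<lambda>x. grad \<phi> x \<bullet> i)" by (rule L2v_comp[OF test_L2v[OF t o] i])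
      have eq1: "(\<integral>x. u1 x * (grad \<phi> x \<bullet> i) \<partial>?M) = - (\<integral>x. (g1 x \<bullet> i) * \<phi> x \<partial>?M)"
        using W1 t i unfolding weak_grad_def by blast
      have eq2: "(\<integral>x. u2 x * (grad \<phi> x \<bullet> i) \<partial>?M) = - (\<integral>x. (g2 x \<bullet> i) * \<phi> x \<partial>?M)"
        using W2 t i unfolding weak_grad_def by blast
      have i1: "integrable ?M (\<lambda>x. u1 x * (grad \<phi> x \<bullet> i))" by (rule L2_prod[OF Lu1 Lgi])
      have i2: "integrable ?M (\<lambda>x. u2 x * (grad \<phi> x \<bullet> i))" by (rule L2_prod[OF Lu2 Lgi])
      have j1: "integrable ?M (\<lambda>x. (g1 x \<bullet> i) * \<phi> x)" by (rule L2_prod[OF L2v_comp[OF Lg1 i] L\<phi>])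
      have j2: "integrable ?M (\<lambda>x. (g2 x \<bullet> i) * \<phi> x)" by (rule L2_prod[OF L2v_comp[OF Lg2 i] L\<phi>])
      have "(\<integral>x. w x * (grad \<phi> x \<bullet> i) \<partial>?M)
          = (\<integral>x. u2 x * (grad \<phi> x \<bullet> i) - u1 x * (grad \<phi> x \<bullet> i) \<partial>?M)"
        unfolding w_def by (simp add: left_diff_distrib)
      also have "\<dots> = (\<integral>x. u2 x * (grad \<phi> x \<bullet> i) \<partial>?M) - (\<integral>x. u1 x * (grad \<phi> x \<bullet> i) \<partial>?M)"
        using i1 i2 by simp
      also have "\<dots> = - ((\<integral>x. (g2 x \<bullet> i) * \<phi> x \<partial>?M) - (\<integral>x. (g1 x \<bullet> i) * \<phi> x \<partial>?M))"
        using eq1 eq2 by simp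
      also have "(\<integral>x. (g2 x \<bullet> i) * \<phi> x \<partial>?M) - (\<integral>x. (g1 x \<bullet> i) * \<phi> x \<partial>?M)
          = (\<integral>x. (g2 x \<bullet> i) * \<phi> x - (g1 x \<bullet> i) * \<phi> x \<partial>?M)"
        using j1 j2 by simp
      also have "\<dots> = (\<integral>x. (h x \<bullet> i) * \<phi> x \<partial>?M)"
        unfolding h_def by (simp add: inner_diff_left left_diff_distrib)
      finally show "(\<integral>x. w x * (grad \<phi> x \<bullet> i) \<partial>?M) = - (\<integral>x. (h x \<bullet> i) * \<phi> x \<partial>?M)" .
    qed
    define \<psi> where "\<psi> = (\<lambda>n x. p2 n x - p1 n x)"
    have \<psi>t: "test_fun \<Omega> (\<psi> n)" for n unfolding \<psi>_def by (rule test_diff[OF p2t p1t])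
    have c1: "(\<lambda>n. \<integral>x. (\<psi> n x - w x)\<^sup>2 \<partial>?M) \<longlonglongrightarrow> 0"
    proof (rule sandwich0[OF _ _ p2a p1a])
      fix n
      show "0 \<le> (\<integral>x. (\<psi> n x - w x)\<^sup>2 \<partial>?M)" by simp
      have a2: "L2 \<Omega> (\<lambda>x. p2 n x - u2 x)" by (rule L2_diff(1)[OF test_L2[OF p2t o] Lu2])
      have a1: "L2 \<Omega> (\<lambda>x. p1 n x - u1 x)" by (rule L2_diff(1)[OF test_L2[OF p1t o] Lu1])
      have "(\<lambda>x. (\<psi> n x - w x)\<^sup>2) = (\<lambda>x. ((p2 n x - u2 x) - (p1 n x - u1 x))\<^sup>2)"
        unfolding \<psi>_def w_def by (simp add: algebra_simps)
      then show "(\<integral>x. (\<psi> n x - w x)\<^sup>2 \<partial>?M) \<le> 2 * (\<integral>x. (p2 n x - u2 x)\<^sup>2 \<partial>?M) + 2 * (\<integral>x. (p1 n x - u1 x)\<^sup>2 \<partial>?M)"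
        using L2_diff(2)[OF a2 a1] by simp
    qed
    have c2: "(\<lambda>n. \<integral>x. (norm (grad (\<psi> n) x - h x))\<^sup>2 \<partial>?M) \<longlonglongrightarrow> 0"
    proof (rule sandwich0[OF _ _ p2b p1b])
      fix n
      show "0 \<le> (\<integral>x. (norm (grad (\<psi> n) x - h x))\<^sup>2 \<partial>?M)" by simp
      have a2: "L2v \<Omega> (\<lambda>x. grad (p2 n) x - g2 x)" by (rule L2v_diff(1)[OF test_L2v[OF p2t o] Lg2])
      have a1: "L2v \<Omega> (\<lambda>x. grad (p1 n) x - g1 x)" by (rule L2v_diff(1)[OF test_L2v[OF p1t o] Lg1])
      have s1: "smooth (p1 n)" and s2: "smooth (p2 n)" using p1t p2t test_fun_def by auto
      have "(\<lambda>x. (norm (grad (\<psi> n) x - h x))\<^sup>2) = (\<lambda>x. (norm ((grad (p2 n) x - g2 x) - (grad (p1 n) x - g1 x)))\<^sup>2)"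
        unfolding \<psi>_def h_def by (simp add: grad_diff[OF s2 s1] algebra_simps)
      then show "(\<integral>x. (norm (grad (\<psi> n) x - h x))\<^sup>2 \<partial>?M) \<le> 2 * (\<integral>x. (norm (grad (p2 n) x - g2 x))\<^sup>2 \<partial>?M) + 2 * (\<integral>x. (norm (grad (p1 n) x - g1 x))\<^sup>2 \<partial>?M)"
        using L2v_diff(2)[OF a2 a1] by simp
    qed
    show ?thesis unfolding H10_def using Lw Lh wg \<psi>t c1 c2 by blast
  qed

  let ?A = "\<integral>x. (w x)\<^sup>2 \<partial>?M"
  let ?B = "\<integral>x. (norm (h x))\<^sup>2 \<partial>?M"
  have A0: "?A \<ge> 0" and B0: "?B \<ge> 0" by auto
  define S where "S = {c. \<forall>u g. H10 \<Omega> u g \<longrightarrow>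
      c * (\<integral>x. (u x)\<^sup>2 \<partial>?M) \<le> (\<integral>x. (norm (g x))\<^sup>2 \<partial>?M)}"
  have lamS: "lambda1 \<Omega> = Sup S" unfolding lambda1_def S_def ..
  have SA: "c * ?A \<le> ?B" if "c \<in> S" for c using that Hw unfolding S_def by blast

  have key: "?A = 0"
  proof (cases "bdd_above S")
    case False
    show ?thesis
    proof (rule ccontr)
      assume "?A \<noteq> 0"
      then have Ap: "?A > 0" using A0 by linarith
      obtain c where c: "c \<in> S" "c > ?B / ?A"
        using False unfolding bdd_above_def by (meson not_le)
      then have "c * ?A > ?B" using Ap by (simp add: field_simps)
      then show False using SA[OF c(1)] by simp
    qed
  next
    case True
    have S0: "0 \<in> S" unfolding S_def by simp
    have l0: "lambda1 \<Omega> \<ge> 0" unfolding lamS by (rule cSup_upper[OF S0 True])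
    have lA: "lambda1 \<Omega> * ?A \<le> ?B"
    proof (cases "?A = 0")
      case True then show ?thesis using B0 by simp
    next
      case False
      then have Ap: "?A > 0" using A0 by linarith
      have "Sup S \<le> ?B / ?A"
      proof (rule cSup_least)
        show "S \<noteq> {}" using S0 by blast
        fix c assume "c \<in> S"
        then show "c \<le> ?B / ?A" using SA Ap by (simp add: field_simps)
      qed
      then show ?thesis using Ap unfolding lamS by (simp add: field_simps)
    qed

    have weq: "(\<integral>x. h x \<bullet> grad \<phi> x \<partial>?M) = (\<integral>x. F x * \<phi> x \<partial>?M)" if t: "test_fun \<Omega> \<phi>" for \<phi>
    proof -
      have Lg\<phi>: "L2v \<Omega> (grad \<phi>)" by (rule test_L2v[OF t o])
      have L\<phi>: "L2 \<Omega> \<phi>" by (rule test_L2[OF t o])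
      have "(\<integral>x. h x \<bullet> grad \<phi> x \<partial>?M) = (\<integral>x. g2 x \<bullet> grad \<phi> x - g1 x \<bullet> grad \<phi> x \<partial>?M)"
        unfolding h_def by (simp add: inner_diff_left)
      also have "\<dots> = (\<integral>x. g2 x \<bullet> grad \<phi> x \<partial>?M) - (\<integral>x. g1 x \<bullet> grad \<phi> x \<partial>?M)"
        using L2v_inner[OF Lg2 Lg\<phi>] L2v_inner[OF Lg1 Lg\<phi>] by simp
      also have "\<dots> = (\<integral>x. f x (u2 x) (g2 x) * \<phi> x \<partial>?M) - (\<integral>x. f x (u1 x) (g1 x) * \<phi> x \<partial>?M)"
        using E1[OF t] E2[OF t] by simp
      also have "\<dots> = (\<integral>x. f x (u2 x) (g2 x) * \<phi> x - f x (u1 x) (g1 x) * \<phi> x \<partial>?M)"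
        using L2_prod[OF LF2 L\<phi>] L2_prod[OF LF1 L\<phi>] by simp
      also have "\<dots> = (\<integral>x. F x * \<phi> x \<partial>?M)"
        unfolding F_def by (simp add: left_diff_distrib)
      finally show ?thesis .
    qed
    have lim_eq: "(\<integral>x. h x \<bullet> g x \<partial>?M) = (\<integral>x. F x * u x \<partial>?M)"
      if pt: "\<And>n. test_fun \<Omega> (p n)" and Lu: "L2 \<Omega> u" and Lg: "L2v \<Omega> g"
        and pa: "(\<lambda>n. \<integral>x. (p n x - u x)\<^sup>2 \<partial>?M) \<longlonglongrightarrow> 0"
        and pb: "(\<lambda>n. \<integral>x. (norm (grad (p n) x - g x))\<^sup>2 \<partial>?M) \<longlonglongrightarrow> 0" for p u g
    proof -
      have "(\<lambda>n. \<integral>x. h x \<bullet> grad (p n) x \<partial>?M) \<longlonglongrightarrow> (\<integral>x. h x \<bullet> g x \<partial>?M)"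
        by (rule L2v_conv[OF Lh test_L2v[OF pt o] Lg pb])
      moreover have "(\<lambda>n. \<integral>x. h x \<bullet> grad (p n) x \<partial>?M) = (\<lambda>n. \<integral>x. F x * p n x \<partial>?M)"
        using weq[OF pt] by simp
      moreover have "(\<lambda>n. \<integral>x. F x * p n x \<partial>?M) \<longlonglongrightarrow> (\<integral>x. F x * u x \<partial>?M)"
        by (rule L2_conv[OF LF test_L2[OF pt o] Lu pa])
      ultimately show ?thesis using LIMSEQ_unique by metis
    qed
    have energy: "?B = (\<integral>x. F x * w x \<partial>?M)"
    proof -
      have "?B = (\<integral>x. h x \<bullet> g2 x - h x \<bullet> g1 x \<partial>?M)"
        unfolding h_def by (simp add: power2_norm_eq_inner inner_diff_right)
      also have "\<dots> = (\<integral>x. h x \<bullet> g2 x \<partial>?M) - (\<integral>x. h x \<bullet> g1 x \<partial>?M)"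
        using L2v_inner[OF Lh Lg2] L2v_inner[OF Lh Lg1] by simp
      also have "\<dots> = (\<integral>x. F x * u2 x \<partial>?M) - (\<integral>x. F x * u1 x \<partial>?M)"
        using lim_eq[OF p2t Lu2 Lg2 p2a p2b] lim_eq[OF p1t Lu1 Lg1 p1a p1b] by simp
      also have "\<dots> = (\<integral>x. F x * u2 x - F x * u1 x \<partial>?M)"
        using L2_prod[OF LF Lu2] L2_prod[OF LF Lu1] by simp
      also have "\<dots> = (\<integral>x. F x * w x \<partial>?M)"
        unfolding w_def by (simp add: right_diff_distrib)
      finally show ?thesis .
    qed
    let ?C = "\<integral>x. \<bar>norm (h x) * w x\<bar> \<partial>?M"
    have Lnh: "L2 \<Omega> (\<lambda>x. norm (h x))" by (rule L2v_norm[OF Lh])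
    have iC: "integrable ?M (\<lambda>x. \<bar>norm (h x) * w x\<bar>)"
      using L2_prod[OF Lnh Lw] by (rule integrable_abs)
    have iA: "integrable ?M (\<lambda>x. (w x)\<^sup>2)" using Lw by (simp add: L2_def)
    have ineq: "(\<integral>x. F x * w x \<partial>?M) \<le> (lambda1 \<Omega> - \<epsilon>) * ?A + L * ?C"
    proof -
      have "(\<integral>x. F x * w x \<partial>?M) \<le> (\<integral>x. (lambda1 \<Omega> - \<epsilon>) * (w x)\<^sup>2 + L * \<bar>norm (h x) * w x\<bar> \<partial>?M)"
      proof (rule integral_mono)
        show "integrable ?M (\<lambda>x. F x * w x)" by (rule L2_prod[OF LF Lw])
        show "integrable ?M (\<lambda>x. (lambda1 \<Omega> - \<epsilon>) * (w x)\<^sup>2 + L * \<bar>norm (h x) * w x\<bar>)"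
          using iA iC by simp
        fix x assume "x \<in> space ?M"
        then have x: "x \<in> \<Omega>" by simp
        show "F x * w x \<le> (lambda1 \<Omega> - \<epsilon>) * (w x)\<^sup>2 + L * \<bar>norm (h x) * w x\<bar>"
          using mono[OF x, of "u2 x" "g2 x" "u1 x" "g1 x"] unfolding F_def w_def h_def
          by (simp add: abs_mult mult.assoc)
      qed
      also have "\<dots> = (lambda1 \<Omega> - \<epsilon>) * ?A + L * ?C" using iA iC by simp
      finally show ?thesis .
    qed
    have Cb: "?C \<le> sqrt ?B * sqrt ?A"
      using cs_real(2)[of "\<lambda>x. norm (h x)" ?M w] Lnh Lw unfolding L2_def by auto
    show ?thesis
    proof (rule ccontr)
      assume "?A \<noteq> 0"
      then have Ap: "?A > 0" using A0 by linarith
      show False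
      proof (rule final_arith[of "sqrt ?A" "sqrt ?B" "lambda1 \<Omega>" \<epsilon> L])
        show "sqrt ?A > 0" using Ap by simp
        show "sqrt ?B \<ge> 0" by simp
        show "lambda1 \<Omega> \<ge> 0" by (rule l0)
        show "\<epsilon> > 0" by fact
        show "L \<ge> 0" by fact
        show "L < Lmax (lambda1 \<Omega>) \<epsilon>" by fact
        have "sqrt (lambda1 \<Omega> * ?A) \<le> sqrt ?B" using lA by (rule real_sqrt_le_mono)
        then show "sqrt (lambda1 \<Omega>) * sqrt ?A \<le> sqrt ?B" by (simp add: real_sqrt_mult)
        have "L * ?C \<le> L * (sqrt ?B * sqrt ?A)" using Cb assms(4) by (rule mult_left_mono)
        then have "?B \<le> (lambda1 \<Omega> - \<epsilon>) * ?A + L * (sqrt ?B * sqrt ?A)"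
          using energy ineq by linarith
        then show "(sqrt ?B)\<^sup>2 \<le> (lambda1 \<Omega> - \<epsilon>) * (sqrt ?A)\<^sup>2 + L * sqrt ?B * sqrt ?A"
          using A0 B0 by (simp add: mult.assoc)
      qed
    qed
  qed
  have "AE x in ?M. (w x)\<^sup>2 = 0"
    using integral_nonneg_eq_0_iff_AE[of ?M "\<lambda>x. (w x)\<^sup>2"] key Lw unfolding L2_def by simp
  then show ?thesis by eventually_elim (simp add: w_def)
qed


end
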